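(* Let $X,Y$ be real Hilbert spaces and $A\colon X\to Y$ compact linear with singular system $(\sigma_i,u_i,v_i)_{i\ge1}$, $\sigma_i>0$. Let $N\ge1$ and $x^\dagger=\sum_{i=1}^N c_iv_i$ with $c_i=\langle x^\dagger,v_i\rangle\neq0$ for $i=1,\dots,N$. Let $y^\delta=Ax^\dagger+\eta$ where $\eta$ is a $Y$-valued random variable such that the coefficients $\eta_i=\langle\eta,u_i\rangle$ satisfy $\mathbb E[\eta_i]=0$ and $\mathbb E[\eta_i^2]=\beta_{\eta,i}^2<\infty$ for all $i$. For $M\in\mathbb N$ let $E_M=T^{(M)}_\alpha y^\delta-x^\dagger$. If $\alpha>0$ satisfies $$2\alpha\ge\max\Big\{0,\ \max_{0\le m<N}\Big(\frac{\beta_{\eta,m+1}^2}{c_{m+1}^2}-\sigma_{m+1}^2\Big)\Big\},$$ then $\mathbb E\big[\|E_N\|^2\big]\le\mathbb E\big[\|E_M\|^2\big]$ for all $M\in\mathbb N$.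
   Context: The singular system means $Ax=\sum_i\sigma_i\langle x,v_i\rangle u_i$ with $(v_i)$, $(u_i)$ orthonormal families. The truncated Tikhonov regularization is $T^{(M)}_\alpha y=\sum_{i=1}^M\frac{\sigma_i}{\sigma_i^2+\alpha}\langle y,u_i\rangle v_i$ (for $M=0$ the empty sum, i.e. $T^{(0)}_\alpha=0$). *)

theory Defs
  imports "HOL-Probability.Probability"
begin

definition compact_operator :: "('x::real_normed_vector \<Rightarrow> 'y::real_normed_vector) \<Rightarrow> bool" where
  "compact_operator A \<longleftrightarrow> bounded_linear A \<and> compact (closure (A ` cball 0 1))"

definition singular_system ::
  "('x::real_inner \<Rightarrow> 'y::real_inner) \<Rightarrow> (nat \<Rightarrow> real) \<Rightarrow> (nat \<Rightarrow> 'y) \<Rightarrow> (nat \<Rightarrow> 'x) \<Rightarrow> bool" where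
  "singular_system A \<sigma> u v \<longleftrightarrow>
     (\<forall>i\<ge>1. \<sigma> i > 0) \<and>
     (\<forall>i\<ge>1. \<forall>j\<ge>i. \<sigma> j \<le> \<sigma> i) \<and>
     (\<forall>i\<ge>1. \<forall>j\<ge>1. inner (u i) (u j) = (if i = j then 1 else 0)) \<and>
     (\<forall>i\<ge>1. \<forall>j\<ge>1. inner (v i) (v j) = (if i = j then 1 else 0)) \<and>
     (\<forall>x. ((\<lambda>i. (\<sigma> i * inner x (v i)) *\<^sub>R u i) has_sum A x) {1..})"

definition tikh_trunc ::
  "(nat \<Rightarrow> real) \<Rightarrow> (nat \<Rightarrow> 'y::real_inner) \<Rightarrow> (nat \<Rightarrow> 'x::real_inner) \<Rightarrow> nat \<Rightarrow> real \<Rightarrow> 'y \<Rightarrow> 'x" where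
  "tikh_trunc \<sigma> u v M \<alpha> y = (\<Sum>i = 1..M. (\<sigma> i / (\<sigma> i ^ 2 + \<alpha>) * inner y (u i)) *\<^sub>R v i)"

end

theory Submission
  imports Defs
begin

lemma norm_sum_orth:
  fixes v :: "nat \<Rightarrow> 'x::real_inner"
  assumes orth: "\<forall>i\<ge>1. \<forall>j\<ge>1. inner (v i) (v j) = (if i = j then 1 else 0)"
    and S: "finite S" "S \<subseteq> {1..}"
  shows "(norm (\<Sum>i\<in>S. d i *\<^sub>R v i))\<^sup>2 = (\<Sum>i\<in>S. (d i)\<^sup>2)"
proof -
  have "(norm (\<Sum>i\<in>S. d i *\<^sub>R v i))\<^sup>2 = inner (\<Sum>i\<in>S. d i *\<^sub>R v i) (\<Sum>j\<in>S. d j *\<^sub>R v j)"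
    by (simp add: power2_norm_eq_inner)
  also have "\<dots> = (\<Sum>i\<in>S. \<Sum>j\<in>S. d i * d j * inner (v i) (v j))"
    apply (simp add: inner_sum_left inner_sum_right sum_distrib_left)
    apply (subst sum.swap)
    apply (rule sum.cong, simp, rule sum.cong, simp)
    apply (simp add: inner_commute)
    done
  also have "\<dots> = (\<Sum>i\<in>S. \<Sum>j\<in>S. (if i = j then d i * d j else 0))"
  proof (rule sum.cong, simp, rule sum.cong, simp)
    fix i j assume "i \<in> S" "j \<in> S"
    then have "i \<ge> 1" "j \<ge> 1" using S(2) by auto
    then show "d i * d j * inner (v i) (v j) = (if i = j then d i * d j else 0)"
      using orth by simp
  qed
  also have "\<dots> = (\<Sum>i\<in>S. (d i)\<^sup>2)"
    using S by (simp add: power2_eq_square)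
  finally show ?thesis .
qed

lemma A_v:
  assumes ss: "singular_system A \<sigma> u v" and j: "j \<ge> 1"
  shows "A (v j) = \<sigma> j *\<^sub>R u j"
proof -
  let ?f = "\<lambda>i. (\<sigma> i * inner (v j) (v i)) *\<^sub>R u i"
  have orth: "\<forall>i\<ge>1. \<forall>j\<ge>1. inner (v i) (v j) = (if i = j then 1 else 0)"
    using ss unfolding singular_system_def by blast
  have h: "(?f has_sum A (v j)) {1..}" using ss unfolding singular_system_def by blast
  have "(?f has_sum A (v j)) {1..} \<longleftrightarrow> (?f has_sum A (v j)) {j}"
    by (rule has_sum_cong_neutral) (use orth j in auto)
  with h have "(?f has_sum A (v j)) {j}" by simp
  moreover have "(?f has_sum (sum ?f {j})) {j}" by (rule has_sum_finite) simp
  ultimately have "A (v j) = sum ?f {j}" using has_sum_unique by blast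
  then show ?thesis using orth j by simp
qed

theorem theorem3:
  fixes A :: "'x::{real_inner, complete_space} \<Rightarrow> 'y::{real_inner, complete_space}"
    and \<sigma> :: "nat \<Rightarrow> real" and u :: "nat \<Rightarrow> 'y" and v :: "nat \<Rightarrow> 'x"
    and N :: nat and c :: "nat \<Rightarrow> real" and xdag :: 'x
    and M :: "'w measure" and \<eta> :: "'w \<Rightarrow> 'y" and \<beta> :: "nat \<Rightarrow> real"
    and \<alpha> :: real
  assumes "compact_operator A"
    and "singular_system A \<sigma> u v"
    and "N \<ge> 1"
    and "xdag = (\<Sum>i = 1..N. c i *\<^sub>R v i)"
    and "\<forall>i\<in>{1..N}. c i = inner xdag (v i) \<and> c i \<noteq> 0"
    and "prob_space M"
    and "\<eta> \<in> borel_measurable M"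
    and "\<forall>i\<ge>1. integrable M (\<lambda>\<omega>. inner (\<eta> \<omega>) (u i)) \<and>
                 integral\<^sup>L M (\<lambda>\<omega>. inner (\<eta> \<omega>) (u i)) = 0"
    and "\<forall>i\<ge>1. integrable M (\<lambda>\<omega>. (inner (\<eta> \<omega>) (u i))\<^sup>2) \<and>
                 integral\<^sup>L M (\<lambda>\<omega>. (inner (\<eta> \<omega>) (u i))\<^sup>2) = (\<beta> i)\<^sup>2"
    and "\<alpha> > 0"
    and "2 * \<alpha> \<ge> max 0 (Max ((\<lambda>m. (\<beta> (m + 1))\<^sup>2 / (c (m + 1))\<^sup>2 - (\<sigma> (m + 1))\<^sup>2) ` {0..<N}))"
  shows "\<forall>K::nat.
           integral\<^sup>L M (\<lambda>\<omega>. (norm (tikh_trunc \<sigma> u v N \<alpha> (A xdag + \<eta> \<omega>) - xdag))\<^sup>2)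
         \<le> integral\<^sup>L M (\<lambda>\<omega>. (norm (tikh_trunc \<sigma> u v K \<alpha> (A xdag + \<eta> \<omega>) - xdag))\<^sup>2)"
proof
  fix K :: nat
  note ss = assms(2)
  have sigpos: "\<And>i. i \<ge> 1 \<Longrightarrow> \<sigma> i > 0" using ss unfolding singular_system_def by blast
  have orthu: "\<forall>i\<ge>1. \<forall>j\<ge>1. inner (u i) (u j) = (if i = j then 1 else 0)"
    using ss unfolding singular_system_def by blast
  have orthv: "\<forall>i\<ge>1. \<forall>j\<ge>1. inner (v i) (v j) = (if i = j then 1 else 0)"
    using ss unfolding singular_system_def by blast
  have lin: "linear A" using assms(1) unfolding compact_operator_def
    using bounded_linear.linear by blast
  define cc where "cc i = (if i \<le> N then c i else 0)" for i
  define e where "e i \<omega> = inner (\<eta> \<omega>) (u i)" for i \<omega>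
  have Ax: "A xdag = (\<Sum>j = 1..N. (c j * \<sigma> j) *\<^sub>R u j)"
    unfolding assms(4) using lin
    by (auto simp add: linear_sum linear_scale A_v[OF ss] intro!: sum.cong)
  have Axu: "inner (A xdag) (u i) = \<sigma> i * cc i" if "i \<ge> 1" for i
  proof -
    have "inner (A xdag) (u i) = (\<Sum>j = 1..N. (c j * \<sigma> j) * inner (u j) (u i))"
      unfolding Ax by (simp add: inner_sum_left)
    also have "\<dots> = (\<Sum>j = 1..N. if j = i then c j * \<sigma> j else 0)"
      by (rule sum.cong) (use orthu that in auto)
    also have "\<dots> = \<sigma> i * cc i" using that by (simp add: cc_def)
    finally show ?thesis .
  qed
  define a where "a K i = (if i \<le> K then \<sigma> i ^ 2 / (\<sigma> i ^ 2 + \<alpha>) * cc i else 0) - cc i" for K i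
  define b where "b K i = (if i \<le> K then \<sigma> i / (\<sigma> i ^ 2 + \<alpha>) else 0)" for K i
  have pointwise: "(norm (tikh_trunc \<sigma> u v K \<alpha> (A xdag + \<eta> \<omega>) - xdag))\<^sup>2
      = (\<Sum>i = 1..L. (a K i + b K i * e i \<omega>)\<^sup>2)" if L: "K \<le> L" "N \<le> L" for K L \<omega>
  proof -
    have t: "tikh_trunc \<sigma> u v K \<alpha> (A xdag + \<eta> \<omega>) =
        (\<Sum>i = 1..L. (if i \<le> K then \<sigma> i / (\<sigma> i ^ 2 + \<alpha>) * inner (A xdag + \<eta> \<omega>) (u i) else 0) *\<^sub>R v i)"
      unfolding tikh_trunc_def
      by (rule sum.mono_neutral_cong_left) (use L in auto)
    have x: "xdag = (\<Sum>i = 1..L. cc i *\<^sub>R v i)"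
      unfolding assms(4) cc_def
      by (rule sum.mono_neutral_cong_left) (use L in auto)
    have tx: "tikh_trunc \<sigma> u v K \<alpha> (A xdag + \<eta> \<omega>) - xdag =
      (\<Sum>i = 1..L. (if i \<le> K then \<sigma> i / (\<sigma> i ^ 2 + \<alpha>) * inner (A xdag + \<eta> \<omega>) (u i) else 0) *\<^sub>R v i)
      - (\<Sum>i = 1..L. cc i *\<^sub>R v i)"
      by (rule arg_cong2[where f="(-)"]) (fact t, fact x)
    have "tikh_trunc \<sigma> u v K \<alpha> (A xdag + \<eta> \<omega>) - xdag = (\<Sum>i = 1..L. (a K i + b K i * e i \<omega>) *\<^sub>R v i)"
      unfolding tx sum_subtractf[symmetric] scaleR_diff_left[symmetric]
    proof (rule sum.cong)
      fix i assume i: "i \<in> {1..L}"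
      have sp: "\<sigma> i ^ 2 + \<alpha> > 0" using assms(10) by (simp add: add_nonneg_pos)
      show "((if i \<le> K then \<sigma> i / (\<sigma> i ^ 2 + \<alpha>) * inner (A xdag + \<eta> \<omega>) (u i) else 0) - cc i) *\<^sub>R v i
          = (a K i + b K i * e i \<omega>) *\<^sub>R v i"
      proof -
        have "(if i \<le> K then \<sigma> i / (\<sigma> i ^ 2 + \<alpha>) * inner (A xdag + \<eta> \<omega>) (u i) else 0) - cc i
            = a K i + b K i * e i \<omega>"
          using i sp by (simp add: inner_add_left Axu a_def b_def e_def add_divide_distrib distrib_left mult.assoc power2_eq_square)
        then show ?thesis by simp
      qed
    qed simp
    then show ?thesis by (simp add: norm_sum_orth[OF orthv])
  qed
  have ei: "integrable M (e i)" "integrable M (\<lambda>\<omega>. (e i \<omega>)\<^sup>2)"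
      "integral\<^sup>L M (e i) = 0" "integral\<^sup>L M (\<lambda>\<omega>. (e i \<omega>)\<^sup>2) = (\<beta> i)\<^sup>2" if "i \<ge> 1" for i
    using assms(8,9) that unfolding e_def by auto
  interpret P: prob_space M by (rule assms(6))
  have sqexp: "(\<lambda>\<omega>. (a K i + b K i * e i \<omega>)\<^sup>2) = (\<lambda>\<omega>. (a K i)\<^sup>2 + (2 * a K i * b K i) * e i \<omega> + (b K i)\<^sup>2 * (e i \<omega>)\<^sup>2)" for K i
    by (rule ext) (simp add: power2_eq_square algebra_simps)
  have intterm: "integrable M (\<lambda>\<omega>. (a K i + b K i * e i \<omega>)\<^sup>2)
      \<and> integral\<^sup>L M (\<lambda>\<omega>. (a K i + b K i * e i \<omega>)\<^sup>2) = (a K i)\<^sup>2 + (b K i)\<^sup>2 * (\<beta> i)\<^sup>2"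
    if "i \<ge> 1" for K i
    unfolding sqexp using ei[OF that] by (simp add: P.prob_space)
  have expect: "integral\<^sup>L M (\<lambda>\<omega>. (norm (tikh_trunc \<sigma> u v K \<alpha> (A xdag + \<eta> \<omega>) - xdag))\<^sup>2)
      = (\<Sum>i = 1..L. (a K i)\<^sup>2 + (b K i)\<^sup>2 * (\<beta> i)\<^sup>2)" if L: "K \<le> L" "N \<le> L" for K L
  proof -
    have "integral\<^sup>L M (\<lambda>\<omega>. (norm (tikh_trunc \<sigma> u v K \<alpha> (A xdag + \<eta> \<omega>) - xdag))\<^sup>2)
        = integral\<^sup>L M (\<lambda>\<omega>. \<Sum>i = 1..L. (a K i + b K i * e i \<omega>)\<^sup>2)"
      using pointwise[OF L] by simp
    also have "\<dots> = (\<Sum>i = 1..L. integral\<^sup>L M (\<lambda>\<omega>. (a K i + b K i * e i \<omega>)\<^sup>2))"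
      by (rule Bochner_Integration.integral_sum[where f="\<lambda>i \<omega>. (a K i + b K i * e i \<omega>)\<^sup>2"]) (use intterm in auto)
    also have "\<dots> = (\<Sum>i = 1..L. (a K i)\<^sup>2 + (b K i)\<^sup>2 * (\<beta> i)\<^sup>2)"
      by (rule sum.cong) (use intterm in auto)
    finally show ?thesis .
  qed
  define L where "L = max K N"
  have hyp: "(\<beta> i)\<^sup>2 \<le> (c i)\<^sup>2 * ((\<sigma> i)\<^sup>2 + 2 * \<alpha>)" if i: "i \<in> {1..N}" for i
  proof -
    have "(\<beta> i)\<^sup>2 / (c i)\<^sup>2 - (\<sigma> i)\<^sup>2 \<in> (\<lambda>m. (\<beta> (m + 1))\<^sup>2 / (c (m + 1))\<^sup>2 - (\<sigma> (m + 1))\<^sup>2) ` {0..<N}"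
      using i by (auto intro!: image_eqI[where x="i - 1"])
    then have "(\<beta> i)\<^sup>2 / (c i)\<^sup>2 - (\<sigma> i)\<^sup>2 \<le> 2 * \<alpha>"
      using assms(11) by (meson Max_ge finite_atLeastLessThan finite_imageI max.bounded_iff order_trans)
    moreover have "(c i)\<^sup>2 > 0" using assms(5) i by (metis zero_less_power2)
    ultimately show ?thesis by (simp add: field_simps)
  qed
  have term_le: "(a N i)\<^sup>2 + (b N i)\<^sup>2 * (\<beta> i)\<^sup>2 \<le> (a K i)\<^sup>2 + (b K i)\<^sup>2 * (\<beta> i)\<^sup>2"
    if i: "i \<in> {1..L}" for i
  proof (cases "i \<le> N")
    case True
    show ?thesis
    proof (cases "i \<le> K")
      case True
      then show ?thesis using \<open>i \<le> N\<close> by (simp add: a_def b_def)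
    next
      case False
      define s where "s = \<sigma> i"
      define d where "d = s ^ 2 + \<alpha>"
      have dp: "d > 0" unfolding d_def using assms(10) by (simp add: add_nonneg_pos)
      have h: "(\<beta> i)\<^sup>2 \<le> (c i)\<^sup>2 * (s\<^sup>2 + 2 * \<alpha>)" using hyp[of i] i True by (simp add: s_def)
      have lhs: "(a N i)\<^sup>2 + (b N i)\<^sup>2 * (\<beta> i)\<^sup>2 = ((\<alpha> * c i)\<^sup>2 + s\<^sup>2 * (\<beta> i)\<^sup>2) / d\<^sup>2"
      proof -
        have an: "a N i = - (\<alpha> * c i) / d"
          using True dp unfolding a_def cc_def s_def[symmetric] d_def[symmetric]
          by (simp add: field_simps d_def)
        have bn: "b N i = s / d"
          using True unfolding b_def s_def d_def by simp
        show ?thesis unfolding an bn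
          by (simp add: power_divide add_divide_distrib power_mult_distrib)
      qed
      have rhs: "(a K i)\<^sup>2 + (b K i)\<^sup>2 * (\<beta> i)\<^sup>2 = (c i)\<^sup>2"
        using True False unfolding a_def b_def cc_def by simp
      have "s\<^sup>2 * (\<beta> i)\<^sup>2 \<le> s\<^sup>2 * ((c i)\<^sup>2 * (s\<^sup>2 + 2 * \<alpha>))"
        using h by (simp add: mult_left_mono)
      then have "(\<alpha> * c i)\<^sup>2 + s\<^sup>2 * (\<beta> i)\<^sup>2 \<le> (c i)\<^sup>2 * d\<^sup>2"
        unfolding d_def by (simp add: power2_eq_square algebra_simps)
      then show ?thesis unfolding lhs rhs using dp by (simp add: divide_le_eq)
    qed
  next
    case False
    then show ?thesis by (simp add: a_def b_def cc_def)
  qed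
  show "integral\<^sup>L M (\<lambda>\<omega>. (norm (tikh_trunc \<sigma> u v N \<alpha> (A xdag + \<eta> \<omega>) - xdag))\<^sup>2)
         \<le> integral\<^sup>L M (\<lambda>\<omega>. (norm (tikh_trunc \<sigma> u v K \<alpha> (A xdag + \<eta> \<omega>) - xdag))\<^sup>2)"
    unfolding expect[of N L, OF max.cobounded2[of N K, folded L_def] max.cobounded2[of N K, folded L_def]]
      expect[of K L, OF max.cobounded1[of K N, folded L_def] max.cobounded2[of N K, folded L_def]]
    by (rule sum_mono) (rule term_le)
qed

end
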